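(* Let $x'=f(x)$, $x\in\mathbb R^d_{>0}$, be the deterministic system of a reaction network with species $X_1,\dots,X_d$, and let $\theta,\mu>0$ be such that there exists a positive steady state $x^*$ with $x^*_1=\mu/\theta$. Suppose: (1) the system admits $k$ linearly independent conservation relations $u^i\cdot x(t)=M_i$ ($i=1,\dots,k$) with $u^i\in\mathbb R^d_{>0}$, written after reordering of coordinates as $[U\,|\,I]x=M$ with $U$ a $k\times\bar d$ matrix, $\bar d=d-k$, $I$ the $k\times k$ identity, and with $u^1_1\ne 0$; (2) all eigenvalues of $J(x^* )$ have strictly negative real parts; (3) $H_2(0)>0$ if $\bar d$ is odd and $H_2(0)<0$ if $\bar d$ is even. Then, for sufficiently small $\theta$ and $\mu$ and sufficiently large initial value $z(0)$ of the control species, all eigenvalues of $\bar J(x^*,z^* )$ have strictly negative real parts; that is, the positive steady state $(x^*,z^* )$ of the union system of the given system and the basic ACR system $X_1+Z\xrightarrow{\theta}2Z$, $Z\xrightarrow{\mu}X_1$ is linearly stable.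
   Context: Reduced system of the original network: using the conservation relations, $x_{\bar d+j}=M_j-\sum_{i=1}^{\bar d}u^j_ix_i$ for $j=1,\dots,k$, and $g_i(x_1,\dots,x_{\bar d})=f_i(x_1,\dots,x_{\bar d},M_1-\sum_i u^1_ix_i,\dots,M_k-\sum_i u^k_ix_i)$ for $i=1,\dots,\bar d$; $J(x^* )$ denotes the Jacobian of $(g_1,\dots,g_{\bar d})$ at $(x^*_1,\dots,x^*_{\bar d})$. Union (controlled) system: $x_1'=f_1(x)-z(\theta x_1-\mu)$, $z'=z(\theta x_1-\mu)$, $x_i'=f_i(x)$ for $i\ge 2$ (mass-action kinetics for the controller). Its conservation relations are $u^i\cdot x+u^i_1z=\bar M_i$, so it reduces to variables $(x_1,\dots,x_{\bar d},z)$ via $x_{\bar d+j}=\bar M_j-\sum_{i=1}^{\bar d}u^j_ix_i-u^j_1z$, giving functions $h_1,\dots,h_{\bar d}$ (obtained from $f_1-z(\theta x_1-\mu),f_2,\dots,f_{\bar d}$ by this substitution) and $h_{\bar d+1}=z(\theta x_1-\mu)$. $(x^*,z^* )$ is a positive steady state of the union system with this $x^*$ ($x^*_1=\mu/\theta$) and $z^*>0$ determined by the conservation relations and the initial data. $\bar J(x^*,z^* )$ is the Jacobian of $(h_1,\dots,h_{\bar d+1})$ in the variables $(x_1,\dots,x_{\bar d},z)$ at $(x^*,z^* )$. $H_2(\lambda)$ is the determinant of the $\bar d\times\bar d$ matrix obtained from $\lambda I-\bar J(x^*,z^* )$ by deleting its last row and its first column; explicitly its rows $i=1,\dots,\bar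 d$ are $(\lambda\delta_{i2}-\partial_2g_i(x^* ),\dots,\lambda\delta_{i\bar d}-\partial_{\bar d}g_i(x^* ),-\partial_zh_i(x^*,z^* ))$. *)

theory Defs
  imports "HOL-Analysis.Derivative" "Jordan_Normal_Form.Char_Poly"
begin

text \<open>Indexing convention: species are 0-indexed, X_1,...,X_d become indices 0,...,d-1.
  The first dbar = d - k coordinates are the free ones, coordinate dbar + j (j < k) is
  eliminated by the (j+1)-th conservation relation. The conservation vector u^(j+1) is
  the function u j :: nat => real (entries at indices < d).  The control species Z is
  the extra reduced variable with index dbar.\<close>

text \<open>A reaction is (source complex, product complex, rate constant).\<close>
type_synonym reaction = "(nat \<Rightarrow> nat) \<times> (nat \<Rightarrow> nat) \<times> real"

definition valid_network :: "nat \<Rightarrow> reaction list \<Rightarrow> bool" where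
  "valid_network d R \<longleftrightarrow>
     (\<forall>(y, y', \<kappa>) \<in> set R. 0 < \<kappa> \<and> y \<noteq> y' \<and> (\<forall>l. d \<le> l \<longrightarrow> y l = 0 \<and> y' l = 0))"

definition mass_action :: "nat \<Rightarrow> reaction list \<Rightarrow> nat \<Rightarrow> (nat \<Rightarrow> real) \<Rightarrow> real" where
  "mass_action d R i x =
     (\<Sum>r\<leftarrow>R. (case r of (y, y', \<kappa>) \<Rightarrow>
         \<kappa> * (real (y' i) - real (y i)) * (\<Prod>l<d. x l ^ y l)))"

definition partial :: "nat \<Rightarrow> ((nat \<Rightarrow> real) \<Rightarrow> real) \<Rightarrow> (nat \<Rightarrow> real) \<Rightarrow> real" where
  "partial j F y = deriv (\<lambda>t. F (y(j := t))) (y j)"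

definition all_eigs_neg :: "real mat \<Rightarrow> bool" where
  "all_eigs_neg A \<longleftrightarrow> (\<forall>ev. eigenvalue (map_mat complex_of_real A) ev \<longrightarrow> Re ev < 0)"

definition lift_orig :: "nat \<Rightarrow> nat \<Rightarrow> (nat \<Rightarrow> nat \<Rightarrow> real) \<Rightarrow> (nat \<Rightarrow> real)
    \<Rightarrow> (nat \<Rightarrow> real) \<Rightarrow> (nat \<Rightarrow> real)" where
  "lift_orig d k u M y = (\<lambda>i. if i < d - k then y i
      else if i < d then M (i - (d - k)) - (\<Sum>l < d - k. u (i - (d - k)) l * y l) else 0)"

definition g_red :: "nat \<Rightarrow> nat \<Rightarrow> reaction list \<Rightarrow> (nat \<Rightarrow> nat \<Rightarrow> real) \<Rightarrow> (nat \<Rightarrow> real)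
    \<Rightarrow> nat \<Rightarrow> (nat \<Rightarrow> real) \<Rightarrow> real" where
  "g_red d k R u M i y = mass_action d R i (lift_orig d k u M y)"

definition cons_val :: "nat \<Rightarrow> (nat \<Rightarrow> nat \<Rightarrow> real) \<Rightarrow> (nat \<Rightarrow> real) \<Rightarrow> nat \<Rightarrow> real" where
  "cons_val d u x j = (\<Sum>i<d. u j i * x i)"

definition J_red :: "nat \<Rightarrow> nat \<Rightarrow> reaction list \<Rightarrow> (nat \<Rightarrow> nat \<Rightarrow> real) \<Rightarrow> (nat \<Rightarrow> real) \<Rightarrow> real mat" where
  "J_red d k R u xs = mat (d - k) (d - k)
      (\<lambda>(i, j). partial j (g_red d k R u (cons_val d u xs) i) xs)"

definition lift_union :: "nat \<Rightarrow> nat \<Rightarrow> (nat \<Rightarrow> nat \<Rightarrow> real) \<Rightarrow> (nat \<Rightarrow> real)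
    \<Rightarrow> (nat \<Rightarrow> real) \<Rightarrow> (nat \<Rightarrow> real)" where
  "lift_union d k u Mb y = (\<lambda>i. if i < d - k then y i
      else if i < d then Mb (i - (d - k)) - (\<Sum>l < d - k. u (i - (d - k)) l * y l)
               - u (i - (d - k)) 0 * y (d - k)
      else 0)"

definition h_union :: "nat \<Rightarrow> nat \<Rightarrow> reaction list \<Rightarrow> (nat \<Rightarrow> nat \<Rightarrow> real) \<Rightarrow> real \<Rightarrow> real
    \<Rightarrow> (nat \<Rightarrow> real) \<Rightarrow> nat \<Rightarrow> (nat \<Rightarrow> real) \<Rightarrow> real" where
  "h_union d k R u \<theta> \<mu> Mb i y =
     (if i < d - k then
        mass_action d R i (lift_union d k u Mb y)
          - (if i = 0 then y (d - k) * (\<theta> * y 0 - \<mu>) else 0)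
      else y (d - k) * (\<theta> * y 0 - \<mu>))"

definition cons_val_union :: "nat \<Rightarrow> (nat \<Rightarrow> nat \<Rightarrow> real) \<Rightarrow> (nat \<Rightarrow> real) \<Rightarrow> real \<Rightarrow> nat \<Rightarrow> real" where
  "cons_val_union d u x z j = (\<Sum>i<d. u j i * x i) + u j 0 * z"

definition red_point :: "nat \<Rightarrow> (nat \<Rightarrow> real) \<Rightarrow> real \<Rightarrow> (nat \<Rightarrow> real)" where
  "red_point dbar xs zs = (\<lambda>i. if i < dbar then xs i else if i = dbar then zs else 0)"

definition Jbar_union :: "nat \<Rightarrow> nat \<Rightarrow> reaction list \<Rightarrow> (nat \<Rightarrow> nat \<Rightarrow> real) \<Rightarrow> real \<Rightarrow> real
    \<Rightarrow> (nat \<Rightarrow> real) \<Rightarrow> real \<Rightarrow> real mat" where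
  "Jbar_union d k R u \<theta> \<mu> xs zs = mat (d - k + 1) (d - k + 1)
      (\<lambda>(i, j). partial j (h_union d k R u \<theta> \<mu> (cons_val_union d u xs zs) i)
                 (red_point (d - k) xs zs))"

text \<open>H_2(lambda): determinant of lambda I - Jbar with last row and first column deleted;
  row i (0-indexed, i < dbar) is
  (lambda delta_(i,1) - d_1 g_i, ..., lambda delta_(i,dbar-1) - d_(dbar-1) g_i, - d_z h_i).\<close>
definition H2 :: "nat \<Rightarrow> nat \<Rightarrow> reaction list \<Rightarrow> (nat \<Rightarrow> nat \<Rightarrow> real) \<Rightarrow> real \<Rightarrow> real
    \<Rightarrow> (nat \<Rightarrow> real) \<Rightarrow> real \<Rightarrow> real \<Rightarrow> real" where
  "H2 d k R u \<theta> \<mu> xs zs lam = det (mat (d - k) (d - k) (\<lambda>(i, c).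
      if c + 1 < d - k then
        (if i = c + 1 then lam else 0) - partial (c + 1) (g_red d k R u (cons_val d u xs) i) xs
      else - partial (d - k) (h_union d k R u \<theta> \<mu> (cons_val_union d u xs zs) i)
                 (red_point (d - k) xs zs)))"

end

theory Submission
  imports Defs
begin

definition Abar :: "nat \<Rightarrow> real mat \<Rightarrow> (nat \<Rightarrow> real) \<Rightarrow> real \<Rightarrow> real mat" where
 "Abar n J b e = mat (Suc n) (Suc n) (\<lambda>(i,j). if i<n then (if j<n then J$$(i,j) - (if i=0 \<and> j=0 then e else 0) else b i) else (if j=0 then e else 0))"

definition Qm :: "nat \<Rightarrow> real mat \<Rightarrow> real \<Rightarrow> complex \<Rightarrow> complex mat" where
 "Qm n J e l = mat n n (\<lambda>(i,j). of_real (J$$(i,j)) - (if i=0\<and>j=0 then of_real e else 0) - (if i=j then l else 0))"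

definition Gm :: "nat \<Rightarrow> real mat \<Rightarrow> (nat \<Rightarrow> real) \<Rightarrow> complex \<Rightarrow> complex mat" where
 "Gm n J b l = mat n n (\<lambda>(i,c). if Suc c < n then of_real (J$$(i,Suc c)) - (if i = Suc c then l else 0) else of_real (b i))"

lemma laplace_Abar:
  assumes n: "1 \<le> n"
  shows "det (char_matrix (map_mat complex_of_real (Abar n J b e)) l)
     = of_real e * (-1)^n * det (Gm n J b l) - l * det (Qm n J e l)"
proof -
  define M where "M = char_matrix (map_mat complex_of_real (Abar n J b e)) l"
  have Mc: "M \<in> carrier_mat (Suc n) (Suc n)" unfolding M_def Abar_def by auto
  have Mij: "M $$ (i,j) = of_real (Abar n J b e $$ (i,j)) - (if i = j then l else 0)"
    if "i < Suc n" "j < Suc n" for i j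
    using that unfolding M_def char_matrix_def Abar_def by auto
  have del0: "mat_delete M n 0 = Gm n J b l"
    by (rule eq_matI) (use Mc n in \<open>auto simp: mat_delete_def Gm_def Mij Abar_def\<close>)
  have deln: "mat_delete M n n = Qm n J e l"
    by (rule eq_matI) (use Mc n in \<open>auto simp: mat_delete_def Qm_def Mij Abar_def\<close>)
  have "det M = (\<Sum>j<Suc n. M $$ (n,j) * cofactor M n j)"
    by (rule laplace_expansion_row[OF Mc]) simp
  also have "\<dots> = (\<Sum>j<n. M $$ (n,j) * cofactor M n j) + M $$ (n,n) * cofactor M n n"
    by simp
  also have "(\<Sum>j<n. M $$ (n,j) * cofactor M n j) = (\<Sum>j<n. if j = 0 then of_real e * cofactor M n 0 else 0)"
    by (rule sum.cong) (auto simp: Mij Abar_def)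
  also have "\<dots> = of_real e * cofactor M n 0" using n by (simp add: sum.delta)
  also have "M $$ (n,n) = - l" using n by (simp add: Mij Abar_def)
  finally show ?thesis unfolding M_def[symmetric] cofactor_def del0 deln
    by (simp add: power_add flip: mult_2)
qed

lemma tendsto_det_mat:
  fixes f :: "'b \<Rightarrow> nat \<Rightarrow> nat \<Rightarrow> complex"
  assumes "\<And>i j. i<n \<Longrightarrow> j<n \<Longrightarrow> ((\<lambda>x. f x i j) \<longlongrightarrow> g i j) F"
  shows "((\<lambda>x. det (mat n n (\<lambda>(i,j). f x i j))) \<longlongrightarrow> det (mat n n (\<lambda>(i,j). g i j))) F"
proof -
  have eq: "det (mat n n (\<lambda>(i,j). h i j)) = (\<Sum>p\<in>{p. p permutes {0..<n}}. signof p * (\<Prod>i=0..<n. h i (p i)))"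
    for h :: "nat\<Rightarrow>nat\<Rightarrow>complex"
    by (subst det_def'[of _ n]) (auto intro!: sum.cong prod.cong simp: permutes_in_image)
  show ?thesis unfolding eq
    by (auto intro!: tendsto_sum tendsto_mult tendsto_prod assms simp: permutes_in_image)
qed

lemma eig_bound:
  assumes A: "A \<in> carrier_mat n n" and ev: "eigenvalue A (l::complex)"
  shows "norm l \<le> (\<Sum>i<n. \<Sum>j<n. norm (A$$(i,j)))"
proof -
  obtain v where v: "v \<in> carrier_vec n" "v \<noteq> 0\<^sub>v n" "A *\<^sub>v v = l \<cdot>\<^sub>v v"
    using ev A unfolding eigenvalue_def eigenvector_def by auto
  have "\<exists>i<n. v$i \<noteq> 0"
  proof (rule ccontr)
    assume "\<not> ?thesis"
    then have "v = 0\<^sub>v n" using v(1) by (intro eq_vecI) auto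
    with v(2) show False by simp
  qed
  then obtain i0 where i0: "i0 < n" "v$i0 \<noteq> 0" by auto
  define m where "m = Max ((\<lambda>i. norm (v$i)) ` {..<n})"
  have fin: "finite ((\<lambda>i. norm (v$i)) ` {..<n})" by simp
  have ne: "(\<lambda>i. norm (v$i)) ` {..<n} \<noteq> {}" using i0 by auto
  obtain i where i: "i < n" "norm (v$i) = m"
    using Max_in[OF fin ne] unfolding m_def by auto
  have vj: "norm (v$j) \<le> m" if "j<n" for j
    unfolding m_def using that by (intro Max_ge[OF fin]) auto
  have "norm (v$i0) \<le> m" using vj i0 by auto
  moreover have "0 < norm (v$i0)" using i0 by simp
  ultimately have mpos: "0 < m" by linarith
  have "(A *\<^sub>v v) $ i = (l \<cdot>\<^sub>v v) $ i" using v(3) by simp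
  then have eqi: "l * v$i = (\<Sum>j<n. A$$(i,j) * v$j)"
    using A v(1) i by (auto simp: scalar_prod_def atLeast0LessThan)
  have "norm l * m = norm (l * v$i)" using i by (simp add: norm_mult)
  also have "\<dots> \<le> (\<Sum>j<n. norm (A$$(i,j)) * norm (v$j))"
    unfolding eqi by (rule order.trans[OF norm_sum]) (simp add: norm_mult)
  also have "\<dots> \<le> (\<Sum>j<n. norm (A$$(i,j)) * m)"
    by (intro sum_mono mult_left_mono vj) auto
  also have "\<dots> = (\<Sum>j<n. norm (A$$(i,j))) * m" by (simp add: sum_distrib_right)
  finally have "norm l \<le> (\<Sum>j<n. norm (A$$(i,j)))" using mpos by simp
  also have "\<dots> \<le> (\<Sum>i<n. \<Sum>j<n. norm (A$$(i,j)))"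
    using i by (intro member_le_sum) (auto intro: sum_nonneg)
  finally show ?thesis .
qed

lemma hurwitz_det_pos:
  assumes J: "J \<in> carrier_mat n n" and H: "all_eigs_neg J"
  shows "0 < (-1)^n * det J"
proof -
  define p where "p = char_poly J"
  have p0: "poly p 0 = (-1)^n * det J"
  proof -
    have "char_matrix J 0 = J" using J by (auto simp: char_matrix_def)
    moreover have "- J = (-1) \<cdot>\<^sub>m J" using J by (auto intro!: eq_matI)
    ultimately show ?thesis unfolding p_def char_poly_matrix[OF J] using J by simp
  qed
  have lc: "lead_coeff p = 1" using degree_monic_char_poly[OF J] unfolding p_def by simp
  obtain T where T: "\<forall>x\<ge>T. lead_coeff p \<le> poly p x" using poly_pinfty_gt_lc[of p] lc by auto
  have noroot: "poly p x \<noteq> 0" if "0 \<le> x" for x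
  proof
    assume "poly p x = 0"
    then have "eigenvalue J x" unfolding p_def using eigenvalue_root_char_poly[OF J] by simp
    then have "eigenvalue (map_mat (of_real :: real \<Rightarrow> complex) J) (of_real x)"
      by (rule of_real_hom.eigenvalue_hom[OF J])
    then have "Re (of_real x) < 0" using H unfolding all_eigs_neg_def by blast
    with that show False by simp
  qed
  have "0 < poly p 0"
  proof (rule ccontr)
    assume "\<not> 0 < poly p 0"
    then have neg: "poly p 0 < 0" using noroot[of 0] by linarith
    have "lead_coeff p \<le> poly p (max T 1)" using T by simp
    then have "0 < poly p (max T 1)" using lc by simp
    have "(0::real) < max T 1" by simp
    from poly_IVT_pos[OF this neg] \<open>0 < poly p (max T 1)\<close>
    obtain x where "x > 0" "poly p x = 0" by auto
    with noroot show False by auto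
  qed
  with p0 show ?thesis by simp
qed

lemma Abar_carrier: "map_mat complex_of_real (Abar n J b e) \<in> carrier_mat (Suc n) (Suc n)"
  unfolding Abar_def by simp

lemma Abar_entry_bound:
  assumes "0 < e" "e < 1" "i < Suc n" "j < Suc n"
  shows "norm (map_mat complex_of_real (Abar n J b e) $$ (i,j)) \<le> \<bar>Abar n J b 0 $$ (i,j)\<bar> + 1"
  using assms by (auto simp: Abar_def)

lemma matrix_main:
  assumes n: "1 \<le> n" and J: "J \<in> carrier_mat n n" and H: "all_eigs_neg J"
    and G0: "det (Gm n J b 0) = of_real g0" and g0: "g0 < 0"
  shows "\<exists>\<delta>>0. \<forall>e. 0 < e \<and> e < \<delta> \<longrightarrow> all_eigs_neg (Abar n J b e)"
proof (rule ccontr)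
  assume "\<not> ?thesis"
  then have "\<forall>\<delta>>0. \<exists>e. 0 < e \<and> e < \<delta> \<and> \<not> all_eigs_neg (Abar n J b e)" by auto
  then have "\<forall>m::nat. \<exists>p. 0 < fst p \<and> fst p < inverse (real (Suc m)) \<and>
      eigenvalue (map_mat complex_of_real (Abar n J b (fst p))) (snd p) \<and> 0 \<le> Re (snd p)"
    unfolding all_eigs_neg_def by (metis fst_conv snd_conv not_less of_nat_0_less_iff positive_imp_inverse_positive zero_less_Suc)
  from choice[OF this] obtain F where F: "\<And>m. 0 < fst (F m) \<and> fst (F m) < inverse (real (Suc m)) \<and>
      eigenvalue (map_mat complex_of_real (Abar n J b (fst (F m)))) (snd (F m)) \<and> 0 \<le> Re (snd (F m))"
    by blast
  define es where "es = (\<lambda>m. fst (F m))"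
  define ls where "ls = (\<lambda>m. snd (F m))"
  have es_pos: "0 < es m" and es_lt: "es m < inverse (real (Suc m))"
    and ls_eig: "eigenvalue (map_mat complex_of_real (Abar n J b (es m))) (ls m)"
    and ls_re: "0 \<le> Re (ls m)" for m
    using F[of m] unfolding es_def ls_def by auto
  have es_lt1: "es m < 1" for m
  proof -
    have "inverse (real (Suc m)) \<le> 1" by (simp add: inverse_le_1_iff)
    with es_lt[of m] show ?thesis by linarith
  qed
  define B where "B = (\<Sum>i<Suc n. \<Sum>j<Suc n. \<bar>Abar n J b 0 $$ (i,j)\<bar> + 1)"
  have ls_bd: "norm (ls m) \<le> B" for m
  proof -
    have "norm (ls m) \<le> (\<Sum>i<Suc n. \<Sum>j<Suc n. norm (map_mat complex_of_real (Abar n J b (es m)) $$ (i,j)))"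
      by (rule eig_bound[OF Abar_carrier ls_eig])
    also have "\<dots> \<le> B" unfolding B_def
      by (intro sum_mono Abar_entry_bound es_pos es_lt1) auto
    finally show ?thesis .
  qed
  have "bounded (range ls)" unfolding bounded_iff using ls_bd by auto
  from bounded_imp_convergent_subsequence[OF this] obtain L r
    where r: "strict_mono r" and lsr: "(ls \<circ> r) \<longlonglongrightarrow> L" by blast
  have es0: "es \<longlonglongrightarrow> 0"
  proof (rule tendsto_sandwich[of "\<lambda>_. 0" _ _ "\<lambda>m. inverse (real (Suc m))"])
    show "\<forall>\<^sub>F m in sequentially. 0 \<le> es m"
      by (intro always_eventually allI less_imp_le es_pos)
    show "\<forall>\<^sub>F m in sequentially. es m \<le> inverse (real (Suc m))"
      by (intro always_eventually allI less_imp_le es_lt)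
    show "(\<lambda>m. inverse (real (Suc m))) \<longlonglongrightarrow> 0" by (rule LIMSEQ_inverse_real_of_nat)
  qed simp
  define e' where "e' = es \<circ> r"
  define l' where "l' = ls \<circ> r"
  have e'0: "e' \<longlonglongrightarrow> 0" unfolding e'_def by (rule LIMSEQ_subseq_LIMSEQ[OF es0 r])
  have l'L: "l' \<longlonglongrightarrow> L" unfolding l'_def by (rule lsr)
  have e'pos: "0 < e' m" for m unfolding e'_def using es_pos by simp
  have l're: "0 \<le> Re (l' m)" for m unfolding l'_def using ls_re by simp
  have eqm: "l' m * det (Qm n J (e' m) (l' m)) = of_real (e' m) * (-1)^n * det (Gm n J b (l' m))" for m
  proof -
    have "eigenvalue (map_mat complex_of_real (Abar n J b (e' m))) (l' m)"
      unfolding e'_def l'_def using ls_eig by simp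
    then have "det (char_matrix (map_mat complex_of_real (Abar n J b (e' m))) (l' m)) = 0"
      using eigenvalue_det[OF Abar_carrier] by blast
    then show ?thesis unfolding laplace_Abar[OF n] by simp
  qed
  have e'0C: "(\<lambda>m. complex_of_real (e' m)) \<longlonglongrightarrow> 0"
    using tendsto_of_real[OF e'0] by simp
  have aux: "((\<lambda>x. c - complex_of_real (e' x)) \<longlongrightarrow> c) sequentially" for c
    using tendsto_diff[OF tendsto_const e'0C, of c] by simp
  have Qlim: "((\<lambda>m. det (Qm n J (e' m) (l' m))) \<longlongrightarrow> det (Qm n J 0 L)) sequentially"
    unfolding Qm_def
    apply (rule tendsto_det_mat)
    subgoal for i j
      by (cases "i = 0 \<and> j = 0"; cases "i = j") (auto intro!: tendsto_intros e'0 l'L aux)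
    done
  have Glim: "((\<lambda>m. det (Gm n J b (l' m))) \<longlongrightarrow> det (Gm n J b L)) sequentially"
    unfolding Gm_def
    apply (rule tendsto_det_mat)
    subgoal for i j
      by (cases "Suc j < n"; cases "i = Suc j") (auto intro!: tendsto_intros l'L)
    done
  have "((\<lambda>m. l' m * det (Qm n J (e' m) (l' m))) \<longlongrightarrow> L * det (Qm n J 0 L)) sequentially"
    by (intro tendsto_intros l'L Qlim)
  moreover have "((\<lambda>m. l' m * det (Qm n J (e' m) (l' m))) \<longlongrightarrow> 0) sequentially"
  proof -
    have "((\<lambda>m. of_real (e' m) * (-1)^n * det (Gm n J b (l' m))) \<longlongrightarrow> of_real 0 * (-1)^n * det (Gm n J b L)) sequentially"
      by (intro tendsto_intros e'0 Glim)
    then show ?thesis unfolding eqm by simp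
  qed
  ultimately have LQ: "L * det (Qm n J 0 L) = 0" using LIMSEQ_unique by blast
  have ReL: "0 \<le> Re L"
    by (rule LIMSEQ_le_const[OF tendsto_Re[OF l'L]]) (use l're in auto)
  have L0: "L = 0"
  proof (rule ccontr)
    assume "L \<noteq> 0"
    with LQ have "det (Qm n J 0 L) = 0" by simp
    moreover have "Qm n J 0 L = char_matrix (map_mat complex_of_real J) L"
      using J by (auto intro!: eq_matI simp: Qm_def char_matrix_def)
    ultimately have "eigenvalue (map_mat complex_of_real J) L"
      using eigenvalue_det[of "map_mat complex_of_real J" n] J by simp
    then have "Re L < 0" using H unfolding all_eigs_neg_def by blast
    with ReL show False by simp
  qed
  have Q00: "det (Qm n J 0 0) = of_real (det J)"
  proof -
    have "Qm n J 0 0 = map_mat complex_of_real J"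
      using J by (auto intro!: eq_matI simp: Qm_def)
    then show ?thesis by simp
  qed
  have dpos: "0 < (-1)^n * det J" by (rule hurwitz_det_pos[OF J H])
  then have dJ: "det J \<noteq> 0" by auto
  define w where "w = (\<lambda>m. (-1)^n * det (Gm n J b (l' m)) / det (Qm n J (e' m) (l' m)))"
  define wL where "wL = (-1)^n * of_real g0 / (of_real (det J) :: complex)"
  have wlim: "w \<longlonglongrightarrow> wL"
    unfolding w_def wL_def
    using Qlim Glim unfolding L0 Q00 G0 by (intro tendsto_intros) (auto simp: dJ)
  have ReWL: "Re wL < 0"
  proof (cases "even n")
    case True
    then have "det J > 0" using dpos by simp
    then show ?thesis using True g0 unfolding wL_def by (simp add: divide_neg_pos)
  next
    case False
    then have "det J < 0" using dpos by simp
    then show ?thesis using False g0 unfolding wL_def by (simp add: divide_neg_neg)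
  qed
  have ev1: "eventually (\<lambda>m. Re (w m) < 0) sequentially"
    using order_tendstoD(2)[OF tendsto_Re[OF wlim] ReWL] .
  have ev2: "eventually (\<lambda>m. det (Qm n J (e' m) (l' m)) \<noteq> 0) sequentially"
    using tendsto_imp_eventually_ne[OF Qlim] unfolding L0 Q00 using dJ by simp
  from eventually_conj[OF ev1 ev2] obtain m where m: "Re (w m) < 0" "det (Qm n J (e' m) (l' m)) \<noteq> 0"
    unfolding eventually_sequentially by auto
  have "l' m = of_real (e' m) * w m"
    using eqm[of m] m(2) unfolding w_def by (simp add: field_simps)
  then have "Re (l' m) = e' m * Re (w m)" by simp
  also have "\<dots> < 0" using e'pos[of m] m(1) by (simp add: mult_pos_neg)
  finally show False using l're[of m] by simp
qed

lemma diff_prod: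
  fixes N :: nat and f :: "nat \<Rightarrow> 'a::real_normed_vector \<Rightarrow> real"
  assumes "\<And>l. (\<lambda>t. f l t) differentiable (at x)"
  shows "(\<lambda>t. \<Prod>l<N. f l t) differentiable (at x)"
  by (induction N) (simp_all add: assms)

lemma mass_action_diff:
  assumes "\<And>l. (\<lambda>t. X t l) differentiable (at x)"
  shows "(\<lambda>t. mass_action d R i (X t)) differentiable (at x)"
proof (induction R)
  case Nil
  then show ?case by (simp add: mass_action_def)
next
  case (Cons r R)
  obtain y y' \<kappa> where r: "r = (y, y', \<kappa>)" by (cases r) auto
  have eq: "(\<lambda>t. mass_action d (r # R) i (X t)) = (\<lambda>t. \<kappa> * (real (y' i) - real (y i)) * (\<Prod>l<d. X t l ^ y l) + mass_action d R i (X t))"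
    by (simp add: mass_action_def r)
  have p: "(\<lambda>t. \<Prod>l<d. X t l ^ y l) differentiable (at x)"
    by (rule diff_prod, rule differentiable_power, rule assms)
  show ?case unfolding eq
    by (intro differentiable_add differentiable_mult differentiable_const p Cons)
qed

lemma upd_diff: "(\<lambda>t. (xs(j:=t)) m :: real) differentiable (at x)"
  by (cases "m = j") simp_all

lemma lift_orig_diff: "(\<lambda>t. lift_orig d k u M (xs(j:=t)) l) differentiable (at x)"
proof (cases "l < d - k")
  case True
  then show ?thesis unfolding lift_orig_def by (simp add: upd_diff del: fun_upd_apply)
next
  case False
  then show ?thesis unfolding lift_orig_def
    by (cases "l < d") (auto intro!: differentiable_diff differentiable_sum differentiable_mult upd_diff simp del: fun_upd_apply)
qed

lemma lift_eq:
  assumes "j < d - k"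
  shows "lift_union d k u (cons_val_union d u xs zs) ((red_point (d-k) xs zs)(j:=t))
       = lift_orig d k u (cons_val d u xs) (xs(j:=t))"
proof
  fix l
  have s: "(\<Sum>l'<d - k. u m l' * ((red_point (d-k) xs zs)(j:=t)) l') = (\<Sum>l'<d - k. u m l' * (xs(j:=t)) l')" for m
    by (rule sum.cong) (auto simp: red_point_def)
  show "lift_union d k u (cons_val_union d u xs zs) ((red_point (d-k) xs zs)(j:=t)) l
       = lift_orig d k u (cons_val d u xs) (xs(j:=t)) l"
    using assms unfolding lift_union_def lift_orig_def s
    by (auto simp: red_point_def cons_val_union_def cons_val_def)
qed

lemma P1:
  assumes j: "j < d - k" and i: "i < d - k"
  shows "partial j (h_union d k R u \<theta> \<mu> (cons_val_union d u xs zs) i) (red_point (d-k) xs zs)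
       = partial j (g_red d k R u (cons_val d u xs) i) xs - (if i = 0 \<and> j = 0 then zs*\<theta> else 0)"
proof -
  define \<Phi> where "\<Phi> = (\<lambda>t. g_red d k R u (cons_val d u xs) i (xs(j:=t)))"
  define \<psi> where "\<psi> = (\<lambda>t. if i = 0 then zs * (\<theta> * (if j = 0 then t else xs 0) - \<mu>) else 0)"
  have eqfun: "(\<lambda>t. h_union d k R u \<theta> \<mu> (cons_val_union d u xs zs) i ((red_point (d-k) xs zs)(j:=t)))
      = (\<lambda>t. \<Phi> t - \<psi> t)"
  proof
    fix t
    have "d - k \<noteq> j" using j by simp
    then show "h_union d k R u \<theta> \<mu> (cons_val_union d u xs zs) i ((red_point (d-k) xs zs)(j:=t)) = \<Phi> t - \<psi> t"
      using i j unfolding h_union_def \<Phi>_def \<psi>_def g_red_def lift_eq[OF j]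
      by (auto simp: red_point_def)
  qed
  have rpj: "red_point (d-k) xs zs j = xs j" using j by (simp add: red_point_def)
  have "\<Phi> differentiable (at (xs j))"
    unfolding \<Phi>_def g_red_def by (intro mass_action_diff lift_orig_diff)
  then have d\<Phi>: "(\<Phi> has_real_derivative deriv \<Phi> (xs j)) (at (xs j))"
    using DERIV_deriv_iff_real_differentiable by blast
  have d\<psi>: "(\<psi> has_real_derivative (if i = 0 \<and> j = 0 then zs*\<theta> else 0)) (at (xs j))"
    unfolding \<psi>_def
    by (cases "i = 0"; cases "j = 0") (auto intro!: derivative_eq_intros)
  have "partial j (h_union d k R u \<theta> \<mu> (cons_val_union d u xs zs) i) (red_point (d-k) xs zs)
      = deriv (\<lambda>t. \<Phi> t - \<psi> t) (xs j)"
    unfolding partial_def eqfun rpj ..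
  also have "\<dots> = deriv \<Phi> (xs j) - (if i = 0 \<and> j = 0 then zs*\<theta> else 0)"
    by (rule DERIV_imp_deriv[OF DERIV_diff[OF d\<Phi> d\<psi>]])
  also have "deriv \<Phi> (xs j) = partial j (g_red d k R u (cons_val d u xs) i) xs"
    unfolding partial_def \<Phi>_def ..
  finally show ?thesis .
qed

lemma P2:
  assumes i: "i < d - k" and n: "0 < d - k" and th: "\<theta> * xs 0 - \<mu> = 0"
  shows "partial (d-k) (h_union d k R u \<theta> \<mu> Mb i) (red_point (d-k) xs zs)
       = partial (d-k) (h_union d k R u 1 (xs 0) Mb i) (red_point (d-k) xs zs)"
proof -
  have "(\<lambda>t. h_union d k R u \<theta> \<mu> Mb i ((red_point (d-k) xs zs)((d-k):=t)))
      = (\<lambda>t. h_union d k R u 1 (xs 0) Mb i ((red_point (d-k) xs zs)((d-k):=t)))"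
    using i n th by (auto simp: h_union_def red_point_def)
  then show ?thesis unfolding partial_def by simp
qed

lemma P3:
  assumes j: "j \<le> d - k" and n: "0 < d - k" and th: "\<theta> * xs 0 - \<mu> = 0"
  shows "partial j (h_union d k R u \<theta> \<mu> Mb (d-k)) (red_point (d-k) xs zs) = (if j = 0 then zs*\<theta> else 0)"
proof -
  consider "j = 0" | "j = d - k" | "0 < j" "j < d - k" using j n by linarith
  then show ?thesis
  proof cases
    case 1
    then have "(\<lambda>t. h_union d k R u \<theta> \<mu> Mb (d-k) ((red_point (d-k) xs zs)(j:=t))) = (\<lambda>t. zs * (\<theta> * t - \<mu>))"
      using n by (auto simp: h_union_def red_point_def)
    moreover have "((\<lambda>t. zs * (\<theta> * t - \<mu>)) has_real_derivative zs * \<theta>) (at (red_point (d-k) xs zs j))"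
      by (auto intro!: derivative_eq_intros)
    ultimately show ?thesis using 1 unfolding partial_def by (simp add: DERIV_imp_deriv)
  next
    case 2
    then have "(\<lambda>t. h_union d k R u \<theta> \<mu> Mb (d-k) ((red_point (d-k) xs zs)(j:=t))) = (\<lambda>t. 0)"
      using n th by (auto simp: h_union_def red_point_def)
    then show ?thesis using 2 n unfolding partial_def by simp
  next
    case 3
    then have "(\<lambda>t. h_union d k R u \<theta> \<mu> Mb (d-k) ((red_point (d-k) xs zs)(j:=t))) = (\<lambda>t. 0)"
      using n th by (auto simp: h_union_def red_point_def)
    then show ?thesis using 3 n unfolding partial_def by simp
  qed
qed

theorem mainTheorem3:
  fixes d k :: nat and R :: "reaction list" and u :: "nat \<Rightarrow> nat \<Rightarrow> real"
    and xs :: "nat \<Rightarrow> real"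
  assumes net: "valid_network d R"
    and k_pos: "1 \<le> k" and k_lt: "k < d"
    \<comment> \<open>(1) conservation relations u^j . x(t) = M_j, in the form [U | I] x = M\<close>
    and cons: "\<And>j x. j < k \<Longrightarrow> (\<forall>i<d. 0 < x i) \<Longrightarrow> (\<Sum>i<d. u j i * mass_action d R i x) = 0"
    and u_id: "\<And>j l. j < k \<Longrightarrow> l < k \<Longrightarrow> u j (d - k + l) = (if l = j then 1 else 0)"
    and u_nonneg: "\<And>j i. j < k \<Longrightarrow> i < d \<Longrightarrow> 0 \<le> u j i"
    and u11: "u 0 0 \<noteq> 0"
    \<comment> \<open>positive steady state x* of the original system\<close>
    and xs_pos: "\<And>i. i < d \<Longrightarrow> 0 < xs i"
    and xs_ss: "\<And>i. i < d \<Longrightarrow> mass_action d R i xs = 0"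
    \<comment> \<open>(2) J(x*) is Hurwitz\<close>
    and hurwitz: "all_eigs_neg (J_red d k R u xs)"
    \<comment> \<open>(3) sign condition on H_2(0), at any admissible theta, mu, z*\<close>
    and H2_sign: "\<And>\<theta> \<mu> zs. 0 < \<theta> \<Longrightarrow> 0 < \<mu> \<Longrightarrow> 0 < zs \<Longrightarrow> xs 0 = \<mu> / \<theta> \<Longrightarrow>
        (if odd (d - k) then H2 d k R u \<theta> \<mu> xs zs 0 > 0 else H2 d k R u \<theta> \<mu> xs zs 0 < 0)"
  shows "\<exists>Z0. \<forall>zs > Z0. \<exists>\<delta> > 0. \<forall>\<theta> \<mu>.
           0 < \<theta> \<and> \<theta> < \<delta> \<and> 0 < \<mu> \<and> \<mu> < \<delta> \<and> xs 0 = \<mu> / \<theta> \<longrightarrow>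
           all_eigs_neg (Jbar_union d k R u \<theta> \<mu> xs zs)"
proof -
  define n where "n = d - k"
  define J where "J = J_red d k R u xs"
  have n: "1 \<le> n" "0 < d - k" using k_lt unfolding n_def by auto
  have Jc: "J \<in> carrier_mat n n" unfolding J_def J_red_def n_def by simp
  have HJ: "all_eigs_neg J" using hurwitz unfolding J_def .
  have xs0: "0 < xs 0" using xs_pos k_lt by simp
  show ?thesis
  proof (rule exI[of _ 0], intro allI impI)
    fix zs :: real assume zs: "zs > 0"
    define Mb where "Mb = cons_val_union d u xs zs"
    define rp where "rp = red_point (d-k) xs zs"
    define b where "b = (\<lambda>i. partial (d-k) (h_union d k R u 1 (xs 0) Mb i) rp)"
    have P2': "partial (d-k) (h_union d k R u \<theta> \<mu> (cons_val_union d u xs zs) i) (red_point (d-k) xs zs) = b i"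
      if "i < d-k" "\<theta> * xs 0 - \<mu> = 0" for i \<theta> \<mu>
      unfolding b_def rp_def Mb_def by (rule P2[where d=d and k=k]) (use that n in auto)
    have P3': "partial j (h_union d k R u \<theta> \<mu> (cons_val_union d u xs zs) (d-k)) (red_point (d-k) xs zs) = (if j = 0 then zs*\<theta> else 0)"
      if "j \<le> d-k" "\<theta> * xs 0 - \<mu> = 0" for j \<theta> \<mu>
      by (rule P3[where d=d and k=k]) (use that n in auto)
    define Gr where "Gr = mat n n (\<lambda>(i,c). if Suc c < n then J$$(i,Suc c) else b i)"
    have G0: "det (Gm n J b 0) = of_real (det Gr)"
    proof -
      have "Gm n J b 0 = map_mat complex_of_real Gr"
        by (rule eq_matI) (auto simp: Gm_def Gr_def)
      then show ?thesis by simp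
    qed
    have Jent: "J $$ (i,j) = partial j (g_red d k R u (cons_val d u xs) i) xs" if "i < n" "j < n" for i j
      using that unfolding J_def J_red_def n_def by simp
    have H2eq: "H2 d k R u \<theta> \<mu> xs zs 0 = (-1)^n * det Gr" if th: "\<theta> * xs 0 - \<mu> = 0" for \<theta> \<mu>
    proof -
      have "H2 d k R u \<theta> \<mu> xs zs 0 = det ((-1) \<cdot>\<^sub>m Gr)"
        unfolding H2_def
        apply (rule arg_cong[where f = det])
        apply (rule eq_matI)
        using th n by (auto simp: Gr_def Jent n_def P2')
      also have "\<dots> = (-1)^n * det Gr" by (simp add: Gr_def)
      finally show ?thesis .
    qed
    have g0: "det Gr < 0"
    proof -
      have "xs 0 = xs 0 / 1" by simp
      from H2_sign[of 1 "xs 0" zs, OF _ xs0 zs this] H2eq[of 1 "xs 0"]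
      show ?thesis by (cases "even n") (auto simp: n_def)
    qed
    obtain \<delta> where \<delta>: "\<delta> > 0" "\<And>e. 0 < e \<Longrightarrow> e < \<delta> \<Longrightarrow> all_eigs_neg (Abar n J b e)"
      using matrix_main[OF n(1) Jc HJ G0 g0] by blast
    show "\<exists>\<delta>>0. \<forall>\<theta> \<mu>. 0 < \<theta> \<and> \<theta> < \<delta> \<and> 0 < \<mu> \<and> \<mu> < \<delta> \<and> xs 0 = \<mu> / \<theta> \<longrightarrow>
           all_eigs_neg (Jbar_union d k R u \<theta> \<mu> xs zs)"
    proof (rule exI[of _ "\<delta> / zs"], intro conjI allI impI)
      show "0 < \<delta> / zs" using \<delta>(1) zs by simp
      fix \<theta> \<mu> assume a: "0 < \<theta> \<and> \<theta> < \<delta> / zs \<and> 0 < \<mu> \<and> \<mu> < \<delta> / zs \<and> xs 0 = \<mu> / \<theta>"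
      then have th: "\<theta> * xs 0 - \<mu> = 0" by simp
      have e: "0 < zs * \<theta>" "zs * \<theta> < \<delta>" using a zs by (auto simp: field_simps)
      have "Jbar_union d k R u \<theta> \<mu> xs zs = Abar n J b (zs * \<theta>)"
      proof (rule eq_matI)
        fix i j assume ij: "i < dim_row (Abar n J b (zs * \<theta>))" "j < dim_col (Abar n J b (zs * \<theta>))"
        then have ij': "i \<le> n" "j \<le> n" by (auto simp: Abar_def)
        show "Jbar_union d k R u \<theta> \<mu> xs zs $$ (i, j) = Abar n J b (zs * \<theta>) $$ (i, j)"
        proof (cases "i < n")
          case True
          show ?thesis
          proof (cases "j < n")
            case True
            with \<open>i < n\<close> show ?thesis
              by (auto simp: Jbar_union_def Abar_def n_def P1 Jent)
          next
            case False
            then have "j = n" using ij' by simp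
            with \<open>i < n\<close> show ?thesis
              by (auto simp: Jbar_union_def Abar_def n_def P2'[OF _ th])
          qed
        next
          case False
          then have "i = n" using ij' by simp
          with ij' show ?thesis
            by (auto simp: Jbar_union_def Abar_def n_def P3'[OF _ th])
        qed
      qed (auto simp: Jbar_union_def Abar_def n_def)
      then have "all_eigs_neg (Jbar_union d k R u \<theta> \<mu> xs zs)" using \<delta>(2)[OF e] by simp
      then show "all_eigs_neg (Jbar_union d k R u \<theta> \<mu> xs zs)" .
    qed
  qed
qed

end
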